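(* Let $\gamma:[0,l]\times[0,w)\to E_1^4$, $(s,t)\mapsto\gamma(s,t)$, be a smooth inextensible one-parameter family of partially null curves in $E_1^4$ parametrized by arclength ($\|\partial\gamma/\partial s\|\equiv1$), with Frenet frame $\{T,N,B_1,B_2\}$, curvatures $k_1,k_2$ (and $k_3\equiv0$), and write $$\frac{\partial\gamma}{\partial t}=\beta_1T+\beta_2N+\beta_3B_1+\beta_4B_2$$ with smooth scalar functions $\beta_i$. Put $\psi_1=\langle\frac{\partial N}{\partial t},B_1\rangle$ and $\psi_2=\langle\frac{\partial N}{\partial t},B_2\rangle$. Then, at points where $\psi_1\neq0$, $$k_1=\frac{1}{\psi_1}\frac{\partial^2\beta_4}{\partial s^2},$$ and $$\frac{\partial^2\beta_3}{\partial s^2}+\frac{\partial(\beta_2k_2)}{\partial s}+\frac{\partial\beta_2}{\partial s}k_2+\beta_1k_1k_2-\beta_4k_2^2-\psi_2k_1=0.$$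
   Context: $E_1^4$ is $\mathbb{R}^4$ with the Lorentzian metric $\langle x,y\rangle=-x_1y_1+x_2y_2+x_3y_3+x_4y_4$ and $\|x\|=\sqrt{|\langle x,x\rangle|}$. A partially null curve is a spacelike curve whose first binormal is a null vector. For such a curve parametrized by arclength $s$, its Frenet frame $\{T,N,B_1,B_2\}$ ($T=\partial\gamma/\partial s$) satisfies $\langle T,T\rangle=\langle N,N\rangle=1$, $\langle B_1,B_1\rangle=\langle B_2,B_2\rangle=0$, $\langle B_1,B_2\rangle=1$, all other inner products zero, and the Frenet equations $T'=k_1N$, $N'=-k_1T+k_2B_1$, $B_1'=k_3B_1$, $B_2'=-k_2N-k_3B_2$, with $k_3\equiv0$. In the family, each $s\mapsto\gamma(s,t)$ is such a curve and frame and curvatures are smooth in $(s,t)$. The flow is inextensible if $\frac{\partial}{\partial t}\|\partial\gamma/\partial u\|=0$. *)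

theory Defs
  imports "HOL-Analysis.Analysis"
begin

text \<open>Minkowski space E_1^4: vectors in real^4, components indexed 1,2,3,4
  (in the numeral type 4 these are four distinct indices).\<close>

definition lor :: "real^4 \<Rightarrow> real^4 \<Rightarrow> real" where
  "lor x y = - (x$1 * y$1) + x$2 * y$2 + x$3 * y$3 + x$4 * y$4"

definition lnorm :: "real^4 \<Rightarrow> real" where
  "lnorm x = sqrt \<bar>lor x x\<bar>"

definition pd_s :: "(real \<times> real \<Rightarrow> 'a::real_normed_vector) \<Rightarrow> real \<times> real \<Rightarrow> 'a" where
  "pd_s f p = vector_derivative (\<lambda>x. f (x, snd p)) (at (fst p))"

definition pd_t :: "(real \<times> real \<Rightarrow> 'a::real_normed_vector) \<Rightarrow> real \<times> real \<Rightarrow> 'a" where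
  "pd_t f p = vector_derivative (\<lambda>y. f (fst p, y)) (at (snd p))"

definition iter_pd :: "bool list \<Rightarrow> (real \<times> real \<Rightarrow> 'a::real_normed_vector) \<Rightarrow> real \<times> real \<Rightarrow> 'a" where
  "iter_pd ds f = fold (\<lambda>b g. if b then pd_s g else pd_t g) ds f"

definition smooth_on :: "(real \<times> real) set \<Rightarrow> (real \<times> real \<Rightarrow> 'a::real_normed_vector) \<Rightarrow> bool" where
  "smooth_on U f \<longleftrightarrow> open U \<and>
     (\<forall>ds. continuous_on U (iter_pd ds f) \<and>
       (\<forall>p\<in>U. (\<lambda>x. iter_pd ds f (x, snd p)) differentiable (at (fst p)) \<and>
               (\<lambda>y. iter_pd ds f (fst p, y)) differentiable (at (snd p))))"

end

theory Submission
  imports Defs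
begin
lemma smooth_s:
  assumes "smooth_on U f" "q \<in> U"
  shows "((\<lambda>x. iter_pd ds f (x, snd q)) has_vector_derivative pd_s (iter_pd ds f) q) (at (fst q))"
  using assms unfolding smooth_on_def pd_s_def by (simp add: vector_derivative_works)
lemma smooth_t:
  assumes "smooth_on U f" "q \<in> U"
  shows "((\<lambda>y. iter_pd ds f (fst q, y)) has_vector_derivative pd_t (iter_pd ds f) q) (at (snd q))"
  using assms unfolding smooth_on_def pd_t_def by (simp add: vector_derivative_works)
lemma smooth_cont: "smooth_on U f \<Longrightarrow> continuous_on U (iter_pd ds f)"
  unfolding smooth_on_def by simp
lemma iter_simps: "iter_pd [] f = f" "iter_pd [True] f = pd_s f" "iter_pd [False] f = pd_t f"
  "iter_pd [True,False] f = pd_t (pd_s f)" "iter_pd [False,True] f = pd_s (pd_t f)"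
  by (simp_all add: iter_pd_def)

lemma box_sub:
  fixes s0 t0 e :: real
  assumes "e > 0" "cball (s0,t0) e \<subseteq> U"
  shows "{s0-e/2..s0+e/2} \<times> {t0-e/2..t0+e/2} \<subseteq> U"
proof
  fix z assume z: "z \<in> {s0-e/2..s0+e/2} \<times> {t0-e/2..t0+e/2}"
  obtain x y where xy: "z = (x,y)" by (cases z)
  have "dist (s0,t0) (x,y) \<le> \<bar>s0-x\<bar> + \<bar>t0-y\<bar>"
    unfolding dist_Pair_Pair dist_real_def by (metis sqrt_sum_squares_le_sum_abs power2_abs)
  also have "\<dots> \<le> e" using z xy by auto
  finally show "z \<in> U" using assms xy by auto
qed

lemma clairaut:
  fixes f :: "real \<times> real \<Rightarrow> real^4"
  assumes sm: "smooth_on U f" and pU: "(s0,t0) \<in> U"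
  shows "pd_s (pd_t f) (s0,t0) = pd_t (pd_s f) (s0,t0)"
proof -
  have oU: "open U" using sm by (simp add: smooth_on_def)
  obtain e where e: "e>0" "cball (s0,t0) e \<subseteq> U" using open_contains_cball oU pU by blast
  define r where "r = e/2"
  define a where "a = s0 - r"
  define b where "b = s0 + r"
  define c where "c = t0 - r"
  define d where "d = t0 + r"
  have r: "r > 0" using e r_def by simp
  have box: "{a..b} \<times> {c..d} \<subseteq> U" using box_sub[OF e] unfolding a_def b_def c_def d_def r_def .
  have boxI: "\<And>x y. a \<le> x \<Longrightarrow> x \<le> b \<Longrightarrow> c \<le> y \<Longrightarrow> y \<le> d \<Longrightarrow> (x,y) \<in> U"
    using box by auto
  have fs_d: "\<And>q. q\<in>U \<Longrightarrow> ((\<lambda>x. f (x, snd q)) has_vector_derivative pd_s f q) (at (fst q))"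
    using smooth_s[OF sm, of _ "[]"] by (simp add: iter_simps)
  have fst_d: "\<And>q. q\<in>U \<Longrightarrow> ((\<lambda>y. pd_s f (fst q, y)) has_vector_derivative pd_t (pd_s f) q) (at (snd q))"
    using smooth_t[OF sm, of _ "[True]"] by (simp add: iter_simps)
  have ft_d: "\<And>q. q\<in>U \<Longrightarrow> ((\<lambda>y. f (fst q, y)) has_vector_derivative pd_t f q) (at (snd q))"
    using smooth_t[OF sm, of _ "[]"] by (simp add: iter_simps)
  have fts_d: "\<And>q. q\<in>U \<Longrightarrow> ((\<lambda>x. pd_t f (x, snd q)) has_vector_derivative pd_s (pd_t f) q) (at (fst q))"
    using smooth_s[OF sm, of _ "[False]"] by (simp add: iter_simps)
  have cfs: "continuous_on U (pd_s f)" using smooth_cont[OF sm, of "[True]"] by (simp add: iter_simps)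
  have cfst: "continuous_on U (pd_t (pd_s f))" using smooth_cont[OF sm, of "[True,False]"] by (simp add: iter_simps)
  have step1: "f (x,y) = f (a,y) + integral {a..x} (\<lambda>\<sigma>. pd_s f (\<sigma>,y))"
    if x: "x \<in> {a..b}" and y: "y \<in> {c..d}" for x y
  proof -
    have "((\<lambda>\<sigma>. pd_s f (\<sigma>,y)) has_integral (f (x,y) - f (a,y))) {a..x}"
    proof (rule fundamental_theorem_of_calculus)
      show "a \<le> x" using x by simp
      fix \<sigma> assume "\<sigma> \<in> {a..x}"
      then have "(\<sigma>,y) \<in> U" using x y by (auto intro!: boxI)
      from fs_d[OF this] show "((\<lambda>\<sigma>. f (\<sigma>, y)) has_vector_derivative pd_s f (\<sigma>, y)) (at \<sigma> within {a..x})"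
        by (simp add: has_vector_derivative_at_within)
    qed
    then show ?thesis by (simp add: integral_unique)
  qed
  have step2: "pd_t f (x,t0) = pd_t f (a,t0) + integral {a..x} (\<lambda>\<sigma>. pd_t (pd_s f) (\<sigma>,t0))"
    if x: "x \<in> {a..b}" for x
  proof -
    have L: "((\<lambda>y. integral (cbox a x) (\<lambda>\<sigma>. pd_s f (\<sigma>,y))) has_vector_derivative
        integral (cbox a x) (\<lambda>\<sigma>. pd_t (pd_s f) (\<sigma>,t0))) (at t0 within {c<..<d})"
    proof (rule leibniz_rule_vector_derivative[where f = "\<lambda>y \<sigma>. pd_s f (\<sigma>,y)" and fx = "\<lambda>y \<sigma>. pd_t (pd_s f)(\<sigma>,y)"])
      fix y \<sigma> assume "y \<in> {c<..<d}" "\<sigma> \<in> cbox a x"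
      then have "(\<sigma>,y) \<in> U" using x by (auto intro!: boxI)
      from fst_d[OF this] show "((\<lambda>y. pd_s f (\<sigma>, y)) has_vector_derivative pd_t (pd_s f) (\<sigma>, y)) (at y within {c<..<d})"
        by (simp add: has_vector_derivative_at_within)
    next
      fix y assume y: "y \<in> {c<..<d}"
      have "continuous_on {a..x} (\<lambda>\<sigma>. pd_s f (\<sigma>,y))"
        by (rule continuous_on_compose2[OF cfs, where f="\<lambda>\<sigma>. (\<sigma>,y)"]) (use x y in \<open>auto intro!: continuous_intros boxI\<close>)
      then show "(\<lambda>\<sigma>. pd_s f (\<sigma>, y)) integrable_on cbox a x"
        by (simp add: integrable_continuous_real)
    next
      show "continuous_on ({c<..<d} \<times> cbox a x) (\<lambda>(y, \<sigma>). pd_t (pd_s f) (\<sigma>, y))"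
      proof -
        have "continuous_on ({c<..<d} \<times> cbox a x) (\<lambda>z. pd_t (pd_s f) (snd z, fst z))"
          by (rule continuous_on_compose2[OF cfst, where f="\<lambda>z. (snd z, fst z)"]) (use x in \<open>auto intro!: continuous_intros boxI\<close>)
        then show ?thesis by (simp add: split_beta)
      qed
    next
      show "t0 \<in> {c<..<d}" using r c_def d_def by auto
      show "convex {c<..<d}" by simp
    qed
    moreover have "at t0 within {c<..<d} = at t0"
      by (rule at_within_open) (use r in \<open>auto simp: c_def d_def\<close>)
    ultimately have L2: "((\<lambda>y. integral {a..x} (\<lambda>\<sigma>. pd_s f (\<sigma>,y))) has_vector_derivative
        integral {a..x} (\<lambda>\<sigma>. pd_t (pd_s f) (\<sigma>,t0))) (at t0)"
      by (simp only: cbox_interval)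
    have aU: "(a,t0) \<in> U" using r by (auto intro!: boxI simp: a_def b_def c_def d_def)
    have L3: "((\<lambda>y. f (a,y) + integral {a..x} (\<lambda>\<sigma>. pd_s f (\<sigma>,y))) has_vector_derivative
        pd_t f (a,t0) + integral {a..x} (\<lambda>\<sigma>. pd_t (pd_s f) (\<sigma>,t0))) (at t0)"
      using has_vector_derivative_add[OF ft_d[OF aU, simplified] L2] by simp
    have L4: "((\<lambda>y. f (x,y)) has_vector_derivative
        pd_t f (a,t0) + integral {a..x} (\<lambda>\<sigma>. pd_t (pd_s f) (\<sigma>,t0))) (at t0)"
      by (rule has_vector_derivative_transform_within_open[OF L3, of "{c<..<d}"])
        (use r c_def d_def step1[OF x] in auto)
    have "(x,t0) \<in> U" using x r by (auto intro!: boxI simp: c_def d_def)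
    from ft_d[OF this] L4 show ?thesis
      by (metis vector_derivative_at fst_conv snd_conv)
  qed
  have s0ab: "s0 \<in> {a..b}" "a < s0" "s0 < b" using r a_def b_def by auto
  have ct: "continuous_on {a..b} (\<lambda>\<sigma>. pd_t (pd_s f) (\<sigma>,t0))"
    by (rule continuous_on_compose2[OF cfst, where f="\<lambda>\<sigma>. (\<sigma>,t0)"]) (use r in \<open>auto intro!: continuous_intros boxI simp: c_def d_def\<close>)
  have M1: "((\<lambda>x. integral {a..x} (\<lambda>\<sigma>. pd_t (pd_s f) (\<sigma>,t0))) has_vector_derivative pd_t (pd_s f) (s0,t0)) (at s0)"
    using integral_has_vector_derivative[OF ct s0ab(1)] s0ab by (simp add: at_within_Icc_at)
  have M2: "((\<lambda>x. pd_t f (a,t0) + integral {a..x} (\<lambda>\<sigma>. pd_t (pd_s f) (\<sigma>,t0))) has_vector_derivative pd_t (pd_s f) (s0,t0)) (at s0)"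
    using has_vector_derivative_add[OF has_vector_derivative_const M1] by simp
  have M3: "((\<lambda>x. pd_t f (x,t0)) has_vector_derivative pd_t (pd_s f) (s0,t0)) (at s0)"
  proof (rule has_vector_derivative_transform_within_open[OF M2, of "{a<..<b}"])
    show "open {a<..<b}" by simp
    show "s0 \<in> {a<..<b}" using s0ab by simp
    fix y assume "y \<in> {a<..<b}"
    then have "y \<in> {a..b}" by simp
    show "pd_t f (a,t0) + integral {a..y} (\<lambda>\<sigma>. pd_t (pd_s f) (\<sigma>,t0)) = pd_t f (y,t0)"
      by (rule sym[OF step2[OF \<open>y \<in> {a..b}\<close>]])
  qed
  from fts_d[OF pU] M3 show ?thesis
    by (metis vector_derivative_at fst_conv snd_conv)
qed

lemma lor_add_left[simp]: "lor (x + y) z = lor x z + lor y z"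
  and lor_add_right[simp]: "lor z (x + y) = lor z x + lor z y"
  and lor_scale_left[simp]: "lor (c *\<^sub>R x) z = c * lor x z"
  and lor_scale_right[simp]: "lor z (c *\<^sub>R x) = c * lor z x"
  and lor_zero_left[simp]: "lor 0 z = 0"
  and lor_zero_right[simp]: "lor z 0 = 0"
  and lor_minus_left[simp]: "lor (- x) z = - lor x z"
  and lor_minus_right[simp]: "lor z (- x) = - lor z x"
  and lor_diff_left[simp]: "lor (x - y) z = lor x z - lor y z"
  and lor_diff_right[simp]: "lor z (x - y) = lor z x - lor z y"
  by (simp_all add: lor_def algebra_simps)

lemma lor_sym: "lor x y = lor y x"
  by (simp add: lor_def mult.commute)

lemma abs4: "\<bar>- x + y + z + u\<bar> \<le> \<bar>x\<bar> + \<bar>y\<bar> + \<bar>z\<bar> + \<bar>u::real\<bar>"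
  by (smt (verit) abs_triangle_ineq abs_minus_cancel)

lemma bb_lor: "bounded_bilinear lor"
proof (rule bounded_bilinear.intro)
  fix a a' b b' :: "real^4" and r :: real
  show "lor (a + a') b = lor a b + lor a' b" "lor a (b + b') = lor a b + lor a b'"
    "lor (r *\<^sub>R a) b = r *\<^sub>R lor a b" "lor a (r *\<^sub>R b) = r *\<^sub>R lor a b" by simp_all
next
  have c: "\<bar>x$i * y$i\<bar> \<le> norm x * norm y" for x y :: "real^4" and i
    unfolding abs_mult by (intro mult_mono component_le_norm_cart) auto
  show "\<exists>K. \<forall>a b. norm (lor a b) \<le> norm a * norm b * K"
  proof (intro exI allI)
    fix a b :: "real^4"
    have "norm (lor a b) \<le> \<bar>a$1 * b$1\<bar> + \<bar>a$2 * b$2\<bar> + \<bar>a$3 * b$3\<bar> + \<bar>a$4 * b$4\<bar>"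
      unfolding lor_def real_norm_def by (rule abs4)
    also have "\<dots> \<le> norm a * norm b * 4" using c[where x=a and y=b and i=1] c[where x=a and y=b and i=2] c[where x=a and y=b and i=3] c[where x=a and y=b and i=4] by linarith
    finally show "norm (lor a b) \<le> norm a * norm b * 4" .
  qed
qed

lemma hvd_lor:
  assumes "(f has_vector_derivative f') (at x)" "(g has_vector_derivative g') (at x)"
  shows "((\<lambda>x. lor (f x) (g x)) has_vector_derivative (lor (f x) g' + lor f' (g x))) (at x)"
  using bounded_bilinear.has_vector_derivative[OF bb_lor assms] .

lemma hvd_scale:
  fixes f :: "real \<Rightarrow> real" and g :: "real \<Rightarrow> 'a::real_normed_vector"
  assumes "(f has_vector_derivative f') (at x)" "(g has_vector_derivative g') (at x)"
  shows "((\<lambda>x. f x *\<^sub>R g x) has_vector_derivative (f x *\<^sub>R g' + f' *\<^sub>R g x)) (at x)"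
  using bounded_bilinear.has_vector_derivative[OF bounded_bilinear_scaleR assms] .

lemma hvd_mult:
  fixes f g :: "real \<Rightarrow> real"
  assumes "(f has_vector_derivative f') (at x)" "(g has_vector_derivative g') (at x)"
  shows "((\<lambda>x. f x * g x) has_vector_derivative (f x * g' + f' * g x)) (at x)"
  using has_vector_derivative_mult[OF assms] .

lemma slice_eq:
  fixes f g :: "real \<Rightarrow> 'a::real_normed_vector"
  assumes ab: "a < b" "x \<in> {a..b}" and f: "(f has_vector_derivative f') (at x)"
    and g: "(g has_vector_derivative g') (at x)" and eq: "\<And>y. y \<in> {a..b} \<Longrightarrow> f y = g y"
  shows "f' = g'"
proof -
  have "(g has_vector_derivative f') (at x within {a..b})"
    by (rule has_vector_derivative_transform_within[OF has_vector_derivative_at_within[OF f], of 1])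
       (use ab eq in auto)
  moreover have "(g has_vector_derivative g') (at x within {a..b})"
    using g by (rule has_vector_derivative_at_within)
  ultimately show ?thesis
    using vector_derivative_unique_within_closed_interval[of a b x g f' g'] ab by simp
qed

theorem corollary3p7:
  fixes \<gamma> T N B1 B2 :: "real \<times> real \<Rightarrow> real^4"
    and k1 k2 \<beta>1 \<beta>2 \<beta>3 \<beta>4 :: "real \<times> real \<Rightarrow> real"
    and l w :: real and U :: "(real \<times> real) set"
  defines "D \<equiv> {0..l} \<times> {0..<w}"
  defines "\<psi>1 \<equiv> (\<lambda>p. lor (pd_t N p) (B1 p))"
  defines "\<psi>2 \<equiv> (\<lambda>p. lor (pd_t N p) (B2 p))"
  assumes lw: "0 < l" "0 < w"
    and U: "D \<subseteq> U"
    and smooth: "smooth_on U \<gamma>" "smooth_on U T" "smooth_on U N" "smooth_on U B1"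
      "smooth_on U B2" "smooth_on U k1" "smooth_on U k2"
      "smooth_on U \<beta>1" "smooth_on U \<beta>2" "smooth_on U \<beta>3" "smooth_on U \<beta>4"
    and tangent: "\<And>p. p \<in> D \<Longrightarrow> T p = pd_s \<gamma> p"
    and arclength: "\<And>p. p \<in> D \<Longrightarrow> lnorm (pd_s \<gamma> p) = 1"
    and inextensible: "\<And>p. p \<in> D \<Longrightarrow> pd_t (\<lambda>q. lnorm (pd_s \<gamma> q)) p = 0"
    and frame: "\<And>p. p \<in> D \<Longrightarrow>
      lor (T p) (T p) = 1 \<and> lor (N p) (N p) = 1 \<and>
      lor (B1 p) (B1 p) = 0 \<and> lor (B2 p) (B2 p) = 0 \<and> lor (B1 p) (B2 p) = 1 \<and>
      lor (T p) (N p) = 0 \<and> lor (T p) (B1 p) = 0 \<and> lor (T p) (B2 p) = 0 \<and>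
      lor (N p) (B1 p) = 0 \<and> lor (N p) (B2 p) = 0"
    and frenet: "\<And>p. p \<in> D \<Longrightarrow>
      pd_s T p = k1 p *\<^sub>R N p \<and>
      pd_s N p = - k1 p *\<^sub>R T p + k2 p *\<^sub>R B1 p \<and>
      pd_s B1 p = 0 \<and>
      pd_s B2 p = - k2 p *\<^sub>R N p"
    and variation: "\<And>p. p \<in> D \<Longrightarrow>
      pd_t \<gamma> p = \<beta>1 p *\<^sub>R T p + \<beta>2 p *\<^sub>R N p + \<beta>3 p *\<^sub>R B1 p + \<beta>4 p *\<^sub>R B2 p"
    and p: "p \<in> D"
  shows "(\<psi>1 p \<noteq> 0 \<longrightarrow> k1 p = pd_s (pd_s \<beta>4) p / \<psi>1 p) \<and>
    pd_s (pd_s \<beta>3) p + pd_s (\<lambda>q. \<beta>2 q * k2 q) p + pd_s \<beta>2 p * k2 p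
      + \<beta>1 p * k1 p * k2 p - \<beta>4 p * (k2 p)^2 - \<psi>2 p * k1 p = 0"
proof -
  have DU: "\<And>q. q \<in> D \<Longrightarrow> q \<in> U" using U by auto
  have Ds: "\<And>q x. q \<in> D \<Longrightarrow> x \<in> {0..l} \<Longrightarrow> (x, snd q) \<in> D"
    unfolding D_def by (auto simp: mem_Times_iff)
  have Dt: "\<And>q y. q \<in> D \<Longrightarrow> y \<in> {0..(snd q + w)/2} \<Longrightarrow> (fst q, y) \<in> D"
    unfolding D_def by (auto simp: mem_Times_iff)
  have Dfs: "\<And>q. q \<in> D \<Longrightarrow> fst q \<in> {0..l}" unfolding D_def by (auto simp: mem_Times_iff)
  have Dt1: "\<And>q. q \<in> D \<Longrightarrow> 0 < (snd q + w)/2"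
    unfolding D_def by (auto simp: mem_Times_iff)
  have Dt2: "\<And>q. q \<in> D \<Longrightarrow> snd q \<in> {0..(snd q + w)/2}"
    unfolding D_def by (auto simp: mem_Times_iff)
  note S0 = smooth_s[of U _ _ "[]", unfolded iter_simps]
  note S1 = smooth_s[of U _ _ "[True]", unfolded iter_simps]
  note S2 = smooth_s[of U _ _ "[False]", unfolded iter_simps]
  note T0 = smooth_t[of U _ _ "[]", unfolded iter_simps]
  note T1 = smooth_t[of U _ _ "[True]", unfolded iter_simps]
  have A: "pd_t T q = pd_s (pd_t \<gamma>) q" if q: "q \<in> D" for q
  proof -
    have eq: "\<And>y. y \<in> {0..(snd q + w)/2} \<Longrightarrow> T (fst q, y) = pd_s \<gamma> (fst q, y)"
      using tangent Dt[OF q] by blast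
    have "pd_t T q = pd_t (pd_s \<gamma>) q"
      by (rule slice_eq[OF Dt1[OF q] Dt2[OF q] T0[OF smooth(2) DU[OF q]] T1[OF smooth(1) DU[OF q]] eq])
    also have "\<dots> = pd_s (pd_t \<gamma>) q"
      using clairaut[OF smooth(1), of "fst q" "snd q"] DU[OF q] by simp
    finally show ?thesis .
  qed
  define DV where "DV q = (\<beta>1 q *\<^sub>R pd_s T q + pd_s \<beta>1 q *\<^sub>R T q) + (\<beta>2 q *\<^sub>R pd_s N q + pd_s \<beta>2 q *\<^sub>R N q)
     + (\<beta>3 q *\<^sub>R pd_s B1 q + pd_s \<beta>3 q *\<^sub>R B1 q) + (\<beta>4 q *\<^sub>R pd_s B2 q + pd_s \<beta>4 q *\<^sub>R B2 q)" for q
  have B: "pd_t T q = DV q" if q: "q \<in> D" for q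
  proof -
    have qU: "q \<in> U" using DU[OF q] .
    have g: "((\<lambda>x. \<beta>1 (x, snd q) *\<^sub>R T (x, snd q) + \<beta>2 (x, snd q) *\<^sub>R N (x, snd q)
        + \<beta>3 (x, snd q) *\<^sub>R B1 (x, snd q) + \<beta>4 (x, snd q) *\<^sub>R B2 (x, snd q)) has_vector_derivative DV q) (at (fst q))"
      using has_vector_derivative_add[OF has_vector_derivative_add[OF has_vector_derivative_add[OF
        hvd_scale[OF S0[OF smooth(8) qU] S0[OF smooth(2) qU]] hvd_scale[OF S0[OF smooth(9) qU] S0[OF smooth(3) qU]]]
        hvd_scale[OF S0[OF smooth(10) qU] S0[OF smooth(4) qU]]] hvd_scale[OF S0[OF smooth(11) qU] S0[OF smooth(5) qU]]]
      by (simp add: DV_def)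
    have eq: "\<And>x. x \<in> {0..l} \<Longrightarrow> pd_t \<gamma> (x, snd q) = \<beta>1 (x, snd q) *\<^sub>R T (x, snd q) + \<beta>2 (x, snd q) *\<^sub>R N (x, snd q)
        + \<beta>3 (x, snd q) *\<^sub>R B1 (x, snd q) + \<beta>4 (x, snd q) *\<^sub>R B2 (x, snd q)"
      using variation Ds[OF q] by blast
    have "pd_s (pd_t \<gamma>) q = DV q"
      by (rule slice_eq[OF lw(1) Dfs[OF q] S2[OF smooth(1) qU] g eq])
    then show ?thesis using A[OF q] by simp
  qed
  have fr: "lor (T q) (T q) = 1 \<and> lor (N q) (N q) = 1 \<and>
      lor (B1 q) (B1 q) = 0 \<and> lor (B2 q) (B2 q) = 0 \<and> lor (B1 q) (B2 q) = 1 \<and>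
      lor (T q) (N q) = 0 \<and> lor (T q) (B1 q) = 0 \<and> lor (T q) (B2 q) = 0 \<and>
      lor (N q) (B1 q) = 0 \<and> lor (N q) (B2 q) = 0 \<and> lor (B2 q) (B1 q) = 1 \<and>
      lor (N q) (T q) = 0 \<and> lor (B1 q) (T q) = 0 \<and> lor (B2 q) (T q) = 0 \<and>
      lor (B1 q) (N q) = 0 \<and> lor (B2 q) (N q) = 0" if q: "q \<in> D" for q
  proof -
    have s: "lor (N q) (T q) = lor (T q) (N q)" "lor (B2 q) (B1 q) = lor (B1 q) (B2 q)"
      "lor (B1 q) (T q) = lor (T q) (B1 q)" "lor (B2 q) (T q) = lor (T q) (B2 q)"
      "lor (B1 q) (N q) = lor (N q) (B1 q)" "lor (B2 q) (N q) = lor (N q) (B2 q)"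
      by (rule lor_sym)+
    show ?thesis using frame[OF q] unfolding s by blast
  qed
  have C1: "lor (pd_t T q) (B1 q) = pd_s \<beta>4 q" if q: "q \<in> D" for q
    unfolding B[OF q] DV_def by (simp add: fr[OF q] frenet[OF q])
  have C2: "lor (pd_t T q) (B2 q) = \<beta>2 q * k2 q + pd_s \<beta>3 q" if q: "q \<in> D" for q
    unfolding B[OF q] DV_def by (simp add: fr[OF q] frenet[OF q] algebra_simps)
  have C3: "lor (pd_t T q) (N q) = \<beta>1 q * k1 q + pd_s \<beta>2 q - \<beta>4 q * k2 q" if q: "q \<in> D" for q
    unfolding B[OF q] DV_def by (simp add: fr[OF q] frenet[OF q] algebra_simps)
  have pU: "p \<in> U" using DU[OF p] .
  have E: "pd_s (pd_t T) p = pd_t k1 p *\<^sub>R N p + k1 p *\<^sub>R pd_t N p"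
  proof -
    have eq: "\<And>y. y \<in> {0..(snd p + w)/2} \<Longrightarrow> pd_s T (fst p, y) = k1 (fst p, y) *\<^sub>R N (fst p, y)"
      using frenet Dt[OF p] by blast
    have "pd_s (pd_t T) p = pd_t (pd_s T) p"
      using clairaut[OF smooth(2), of "fst p" "snd p"] pU by simp
    with slice_eq[OF Dt1[OF p] Dt2[OF p] T1[OF smooth(2) pU] hvd_scale[OF T0[OF smooth(6) pU] T0[OF smooth(3) pU]] eq]
    show ?thesis by simp
  qed
  have F1: "pd_s (pd_s \<beta>4) p = k1 p * \<psi>1 p"
  proof -
    have eq: "\<And>x. x \<in> {0..l} \<Longrightarrow> lor (pd_t T (x, snd p)) (B1 (x, snd p)) = pd_s \<beta>4 (x, snd p)"
      using C1 Ds[OF p] by blast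
    from slice_eq[OF lw(1) Dfs[OF p] hvd_lor[OF S2[OF smooth(2) pU] S0[OF smooth(4) pU]] S1[OF smooth(11) pU] eq]
    have "lor (pd_t T p) (pd_s B1 p) + lor (pd_s (pd_t T) p) (B1 p) = pd_s (pd_s \<beta>4) p" by simp
    then show ?thesis unfolding \<psi>1_def by (simp add: E fr[OF p] frenet[OF p])
  qed
  have F2: "pd_s (\<lambda>q. \<beta>2 q * k2 q) p = \<beta>2 p * pd_s k2 p + pd_s \<beta>2 p * k2 p"
  proof -
    have "pd_s (\<lambda>q. \<beta>2 q * k2 q) p = vector_derivative (\<lambda>x. \<beta>2 (x, snd p) * k2 (x, snd p)) (at (fst p))"
      by (simp add: pd_s_def)
    with vector_derivative_at[OF hvd_mult[OF S0[OF smooth(9) pU] S0[OF smooth(7) pU]]]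
    show ?thesis by simp
  qed
  have F3: "lor (pd_t T p) (pd_s B2 p) + lor (pd_s (pd_t T) p) (B2 p)
      = (\<beta>2 p * pd_s k2 p + pd_s \<beta>2 p * k2 p) + pd_s (pd_s \<beta>3) p"
  proof -
    have eq: "\<And>x. x \<in> {0..l} \<Longrightarrow> lor (pd_t T (x, snd p)) (B2 (x, snd p)) = \<beta>2 (x, snd p) * k2 (x, snd p) + pd_s \<beta>3 (x, snd p)"
      using C2 Ds[OF p] by blast
    from slice_eq[OF lw(1) Dfs[OF p] hvd_lor[OF S2[OF smooth(2) pU] S0[OF smooth(5) pU]]
          has_vector_derivative_add[OF hvd_mult[OF S0[OF smooth(9) pU] S0[OF smooth(7) pU]] S1[OF smooth(10) pU]] eq]
    show ?thesis by simp
  qed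
  have F4: "lor (pd_t T p) (pd_s B2 p) + lor (pd_s (pd_t T) p) (B2 p)
      = - k2 p * (\<beta>1 p * k1 p + pd_s \<beta>2 p - \<beta>4 p * k2 p) + k1 p * \<psi>2 p"
    unfolding \<psi>2_def E by (simp add: fr[OF p] frenet[OF p] C3[OF p] algebra_simps)
  show ?thesis
  proof
    show "\<psi>1 p \<noteq> 0 \<longrightarrow> k1 p = pd_s (pd_s \<beta>4) p / \<psi>1 p" using F1 by simp
    show "pd_s (pd_s \<beta>3) p + pd_s (\<lambda>q. \<beta>2 q * k2 q) p + pd_s \<beta>2 p * k2 p
      + \<beta>1 p * k1 p * k2 p - \<beta>4 p * (k2 p)^2 - \<psi>2 p * k1 p = 0"
      using F2 F3 F4 by (simp add: algebra_simps power2_eq_square)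
  qed
qed

end
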